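(* Let $V$ be a finite nonempty set and $f:\{0,1\}^V\to\{0,1\}^V$. (1) If the asynchronous state graph $\Gamma(f)$ has at least two attractors, then $f$ has a 2-critical subnetwork. (2) If $f$ is non-expansive and $\Gamma(f)$ has a cyclic attractor, then $f$ has no fixed point, and hence $f$ has a 0-critical subnetwork.
   Context: $e_i$ is the point of $\{0,1\}^V$ whose only $1$ is at component $i$; $\oplus$ is componentwise addition mod 2; $d$ is the Hamming distance; $f$ is non-expansive if $d(f(x),f(y))\le d(x,y)$ for all $x,y$. $\Gamma(f)$ is the digraph on $\{0,1\}^V$ with an arc $x\to x\oplus e_i$ whenever $f_i(x)\neq x_i$. Attractors are the terminal strongly connected components of $\Gamma(f)$; an attractor is cyclic if it contains at least two points. For nonempty $I\subseteq V$ and $z\in\{0,1\}^{V\setminus I}$, the subnetwork of $f$ induced by $z$ is $h:\{0,1\}^I\to\{0,1\}^I$ with $h(x|_I)=f(x)|_I$ for all $x$ whose restriction to $V\setminus I$ is $z$ ($f$ is a subnetwork of itself); a strict subnetwork is one different from the network. A network is 2-critical if it has at least two fixed points and each of its strict subnetworks has at most one fixed point; 0-critical if it has no fixed point and each of its strict subnetworks has at least one fixed point. *)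

theory Defs
  imports Main
begin

text \<open>The finite nonempty set V is the finite type 'v. For I \<subseteq> V, a point of {0,1}^I is represented canonically as a map
  that is False outside I. A network on I is a map h on such points (values on
  non-canonical inputs are irrelevant).\<close>

definition pts :: "'v set \<Rightarrow> ('v \<Rightarrow> bool) set" where
  "pts I = {x. \<forall>i. i \<notin> I \<longrightarrow> \<not> x i}"

definition restr :: "'v set \<Rightarrow> ('v \<Rightarrow> bool) \<Rightarrow> ('v \<Rightarrow> bool)" where
  "restr J x = (\<lambda>i. i \<in> J \<and> x i)"

definition subnet :: "(('v \<Rightarrow> bool) \<Rightarrow> ('v \<Rightarrow> bool)) \<Rightarrow> 'v set \<Rightarrow> ('v \<Rightarrow> bool)
    \<Rightarrow> (('v \<Rightarrow> bool) \<Rightarrow> ('v \<Rightarrow> bool))" where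
  "subnet h J z = (\<lambda>y. restr J (h (\<lambda>i. if i \<in> J then y i else z i)))"

definition fixpts :: "'v set \<Rightarrow> (('v \<Rightarrow> bool) \<Rightarrow> ('v \<Rightarrow> bool)) \<Rightarrow> ('v \<Rightarrow> bool) set" where
  "fixpts I h = {x \<in> pts I. h x = x}"

definition two_critical :: "'v set \<Rightarrow> (('v \<Rightarrow> bool) \<Rightarrow> ('v \<Rightarrow> bool)) \<Rightarrow> bool" where
  "two_critical I h \<longleftrightarrow> card (fixpts I h) \<ge> 2 \<and>
     (\<forall>J z. J \<noteq> {} \<and> J \<subset> I \<and> z \<in> pts (I - J) \<longrightarrow> card (fixpts J (subnet h J z)) \<le> 1)"

definition zero_critical :: "'v set \<Rightarrow> (('v \<Rightarrow> bool) \<Rightarrow> ('v \<Rightarrow> bool)) \<Rightarrow> bool" where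
  "zero_critical I h \<longleftrightarrow> fixpts I h = {} \<and>
     (\<forall>J z. J \<noteq> {} \<and> J \<subset> I \<and> z \<in> pts (I - J) \<longrightarrow> fixpts J (subnet h J z) \<noteq> {})"

text \<open>Subnetworks of f :: {0,1}^V \<rightarrow> {0,1}^V (f itself is the case J = V).\<close>
definition has_subnet_with :: "(('v \<Rightarrow> bool) \<Rightarrow> ('v \<Rightarrow> bool))
    \<Rightarrow> ('v set \<Rightarrow> (('v \<Rightarrow> bool) \<Rightarrow> ('v \<Rightarrow> bool)) \<Rightarrow> bool) \<Rightarrow> bool" where
  "has_subnet_with f P \<longleftrightarrow> (\<exists>J z. J \<noteq> {} \<and> z \<in> pts (UNIV - J) \<and> P J (subnet f J z))"

definition flip :: "('v \<Rightarrow> bool) \<Rightarrow> 'v \<Rightarrow> ('v \<Rightarrow> bool)" where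
  "flip x i = x(i := \<not> x i)"

definition asg :: "(('v \<Rightarrow> bool) \<Rightarrow> ('v \<Rightarrow> bool)) \<Rightarrow> (('v \<Rightarrow> bool) \<times> ('v \<Rightarrow> bool)) set" where
  "asg f = {(x, flip x i) | x i. f x i \<noteq> x i}"

definition strongly_connected :: "('a \<times> 'a) set \<Rightarrow> 'a set \<Rightarrow> bool" where
  "strongly_connected R A \<longleftrightarrow> (\<forall>x\<in>A. \<forall>y\<in>A. (x, y) \<in> R\<^sup>*)"

definition scc :: "('a \<times> 'a) set \<Rightarrow> 'a set \<Rightarrow> bool" where
  "scc R A \<longleftrightarrow> A \<noteq> {} \<and> strongly_connected R A \<and>
     (\<forall>B. A \<subseteq> B \<and> strongly_connected R B \<longrightarrow> B = A)"

definition attractor :: "(('v \<Rightarrow> bool) \<Rightarrow> ('v \<Rightarrow> bool)) \<Rightarrow> ('v \<Rightarrow> bool) set \<Rightarrow> bool" where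
  "attractor f A \<longleftrightarrow> scc (asg f) A \<and> (\<forall>x y. x \<in> A \<and> (x, y) \<in> asg f \<longrightarrow> y \<in> A)"

definition cyclic_attractor :: "(('v \<Rightarrow> bool) \<Rightarrow> ('v \<Rightarrow> bool)) \<Rightarrow> ('v \<Rightarrow> bool) set \<Rightarrow> bool" where
  "cyclic_attractor f A \<longleftrightarrow> attractor f A \<and> (\<exists>x\<in>A. \<exists>y\<in>A. x \<noteq> y)"

definition hamming :: "('v::finite \<Rightarrow> bool) \<Rightarrow> ('v \<Rightarrow> bool) \<Rightarrow> nat" where
  "hamming x y = card {i. x i \<noteq> y i}"

definition non_expansive :: "(('v::finite \<Rightarrow> bool) \<Rightarrow> ('v \<Rightarrow> bool)) \<Rightarrow> bool" where
  "non_expansive f \<longleftrightarrow> (\<forall>x y. hamming (f x) (f y) \<le> hamming x y)"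

end

theory Submission
  imports Defs
begin

definition trap :: "'v set \<Rightarrow> (('v \<Rightarrow> bool) \<Rightarrow> ('v \<Rightarrow> bool)) \<Rightarrow> ('v \<Rightarrow> bool) set \<Rightarrow> bool" where
  "trap I h S \<longleftrightarrow> S \<subseteq> pts I \<and> (\<forall>x\<in>S. \<forall>i\<in>I. h x i \<noteq> x i \<longrightarrow> flip x i \<in> S)"

lemma subnet_comp:
  assumes "J2 \<subseteq> J"
  shows "subnet (subnet f J z) J2 z2 = subnet f J2 (\<lambda>k. if k \<in> J then z2 k else z k)"
proof -
  have a: "\<And>y. (\<lambda>k. if k \<in> J then (if k \<in> J2 then y k else z2 k) else z k)
        = (\<lambda>k. if k \<in> J2 then y k else (if k \<in> J then z2 k else z k))"
    using assms by (auto simp: fun_eq_iff)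
  show ?thesis using assms unfolding subnet_def restr_def
    by (simp add: a fun_eq_iff) blast
qed

lemma subnet_comp_pts:
  assumes "J2 \<subseteq> J" "z2 \<in> pts (J - J2)" "z \<in> pts (UNIV - J)"
  shows "(\<lambda>k. if k \<in> J then z2 k else z k) \<in> pts (UNIV - J2)"
  using assms by (auto simp: pts_def)

lemma fix_trap:
  assumes "p \<in> fixpts I h"
  shows "trap I h {p}"
  using assms by (auto simp: trap_def fixpts_def)

lemma trap_slice:
  assumes T: "trap J (subnet f J z) T" and i: "i \<in> J"
  shows "trap (J - {i}) (subnet f (J - {i}) (z(i:=c))) {y \<in> pts (J - {i}). y(i:=c) \<in> T}"
  unfolding trap_def
proof (intro conjI ballI impI)
  show "{y \<in> pts (J - {i}). y(i := c) \<in> T} \<subseteq> pts (J - {i})" by blast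
next
  fix y j
  assume y: "y \<in> {y \<in> pts (J - {i}). y(i := c) \<in> T}" and j: "j \<in> J - {i}"
    and ne: "subnet f (J - {i}) (z(i := c)) y j \<noteq> y j"
  have arg: "(\<lambda>k. if k \<in> J then (y(i:=c)) k else z k) = (\<lambda>k. if k \<in> J - {i} then y k else (z(i:=c)) k)"
    using i by (auto simp: fun_eq_iff)
  have eq: "subnet f J z (y(i:=c)) j = subnet f (J - {i}) (z(i := c)) y j"
    using j i by (simp add: subnet_def restr_def arg)
  have "flip (y(i:=c)) j \<in> T"
    using T y j ne eq unfolding trap_def by auto
  moreover have "flip (y(i:=c)) j = (flip y j)(i:=c)" using j by (auto simp: flip_def fun_eq_iff)
  moreover have "flip y j \<in> pts (J - {i})" using y j by (auto simp: pts_def flip_def)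
  ultimately show "flip y j \<in> {y \<in> pts (J - {i}). y(i := c) \<in> T}" by simp
qed


lemma trap_single_fix:
  assumes "trap J (subnet f J z) T" "a \<in> T" "\<And>x. x \<in> T \<Longrightarrow> x = a"
  shows "a \<in> fixpts J (subnet f J z)"
proof -
  have ap: "a \<in> pts J" using assms unfolding trap_def by blast
  have "subnet f J z a j = a j" for j
  proof (cases "j \<in> J")
    case True
    show ?thesis
    proof (rule ccontr)
      assume "subnet f J z a j \<noteq> a j"
      then have "flip a j \<in> T" using assms True unfolding trap_def by blast
      then have "flip a j = a" using assms by blast
      then show False by (metis flip_def fun_upd_same)
    qed
  next
    case False
    then show ?thesis using ap by (simp add: subnet_def restr_def pts_def)
  qed
  then show ?thesis using ap by (auto simp: fixpts_def)
qed

lemma crit_fix: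
  fixes f :: "('v::finite \<Rightarrow> bool) \<Rightarrow> ('v \<Rightarrow> bool)"
  assumes J: "J \<noteq> {}" "z \<in> pts (UNIV - J)"
    and T1: "trap J (subnet f J z) T1" and T2: "trap J (subnet f J z) T2"
    and ne: "T1 \<noteq> {}" "T2 \<noteq> {}" and dis: "T1 \<inter> T2 = {}"
    and min: "\<And>J' z' S1 S2. J' \<noteq> {} \<Longrightarrow> z' \<in> pts (UNIV - J') \<Longrightarrow> card J' < card J
       \<Longrightarrow> trap J' (subnet f J' z') S1 \<Longrightarrow> trap J' (subnet f J' z') S2
       \<Longrightarrow> S1 \<noteq> {} \<Longrightarrow> S2 \<noteq> {} \<Longrightarrow> S1 \<inter> S2 \<noteq> {}"
  shows "card (fixpts J (subnet f J z)) \<ge> 2"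
proof -
  have sep: "\<not>((\<exists>x\<in>T1. x i = c) \<and> (\<exists>x\<in>T2. x i = c))" if i: "i \<in> J" for i c
  proof
    assume "(\<exists>x\<in>T1. x i = c) \<and> (\<exists>x\<in>T2. x i = c)"
    then obtain x1 x2 where x1: "x1 \<in> T1" "x1 i = c" and x2: "x2 \<in> T2" "x2 i = c" by blast
    have p1: "x1 \<in> pts J" using x1 T1 unfolding trap_def by blast
    have p2: "x2 \<in> pts J" using x2 T2 unfolding trap_def by blast
    show False
    proof (cases "J - {i} = {}")
      case True
      then have "x1 = x2" using p1 p2 x1 x2 i by (auto simp: pts_def fun_eq_iff)
      then show False using dis x1 x2 by blast
    next
      case False
      define S1 where "S1 = {y \<in> pts (J - {i}). y(i:=c) \<in> T1}"
      define S2 where "S2 = {y \<in> pts (J - {i}). y(i:=c) \<in> T2}"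
      have t1: "trap (J - {i}) (subnet f (J - {i}) (z(i:=c))) S1"
        unfolding S1_def by (rule trap_slice[OF T1 i])
      have t2: "trap (J - {i}) (subnet f (J - {i}) (z(i:=c))) S2"
        unfolding S2_def by (rule trap_slice[OF T2 i])
      have "(x1(i:=False))(i:=c) = x1" using x1(2) by (auto simp: fun_eq_iff)
      then have "x1(i:=False) \<in> S1" using p1 x1 unfolding S1_def by (auto simp: pts_def)
      then have n1: "S1 \<noteq> {}" by blast
      have "(x2(i:=False))(i:=c) = x2" using x2(2) by (auto simp: fun_eq_iff)
      then have "x2(i:=False) \<in> S2" using p2 x2 unfolding S2_def by (auto simp: pts_def)
      then have n2: "S2 \<noteq> {}" by blast
      have zp: "z(i:=c) \<in> pts (UNIV - (J - {i}))" using J(2) by (auto simp: pts_def)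
      have "card (J - {i}) < card J" using i by (intro card_Diff1_less) auto
      then have "S1 \<inter> S2 \<noteq> {}" using min[OF False zp _ t1 t2 n1 n2] by blast
      then show False using dis unfolding S1_def S2_def by blast
    qed
  qed
  have single: "x = x'"
    if sp: "\<And>i c. i \<in> J \<Longrightarrow> \<not>((\<exists>x\<in>T. x i = c) \<and> (\<exists>x\<in>T'. x i = c))"
      and TP: "T \<subseteq> pts J" and T'n: "T' \<noteq> {}" and xx: "x \<in> T" "x' \<in> T" for T T' x x'
  proof (rule ext)
    fix i
    obtain y where y: "y \<in> T'" using T'n by blast
    show "x i = x' i"
    proof (cases "i \<in> J")
      case True
      show ?thesis
      proof (rule ccontr)
        assume "x i \<noteq> x' i"
        then have "x i = y i \<or> x' i = y i" by (cases "y i") auto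
        then show False using sp[OF True, of "y i"] y xx by blast
      qed
    next
      case False
      then show ?thesis using TP xx by (auto simp: pts_def)
    qed
  qed
  obtain a where a: "a \<in> T1" using ne by blast
  obtain b where b: "b \<in> T2" using ne by blast
  have P1: "T1 \<subseteq> pts J" using T1 unfolding trap_def by blast
  have P2: "T2 \<subseteq> pts J" using T2 unfolding trap_def by blast
  have sep2: "\<not>((\<exists>x\<in>T2. x i = c) \<and> (\<exists>x\<in>T1. x i = c))" if "i \<in> J" for i c
    using sep[OF that, of c] by blast
  have Sa: "x = a" if "x \<in> T1" for x
    by (rule single[of T1 T2 x a, OF sep P1 ne(2) that a])
  have Sb: "x = b" if "x \<in> T2" for x
    by (rule single[of T2 T1 x b, OF sep2 P2 ne(1) that b])
  have fa: "a \<in> fixpts J (subnet f J z)" by (rule trap_single_fix[OF T1 a Sa])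
  have fb: "b \<in> fixpts J (subnet f J z)" by (rule trap_single_fix[OF T2 b Sb])
  have ab: "a \<noteq> b" using a b dis by blast
  have sub: "{a, b} \<subseteq> fixpts J (subnet f J z)" using fa fb by simp
  have fin: "finite (fixpts J (subnet f J z))" by simp
  have "card {a, b} \<le> card (fixpts J (subnet f J z))" by (rule card_mono[OF fin sub])
  then show ?thesis using ab by simp
qed


lemma subnet_UNIV: "subnet f UNIV z = f"
  by (simp add: subnet_def restr_def fun_eq_iff)

lemma pts_UNIV: "pts UNIV = UNIV"
  by (simp add: pts_def)

lemma pts_empty: "(\<lambda>_. False) \<in> pts I"
  by (simp add: pts_def)

lemma attr_trap:
  assumes "attractor f A"
  shows "trap UNIV (subnet f UNIV (\<lambda>_. False)) A"
  unfolding trap_def subnet_UNIV pts_UNIV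
proof (intro conjI ballI impI)
  show "A \<subseteq> UNIV" by simp
next
  fix x i assume x: "x \<in> A" and "f x i \<noteq> x i"
  then have "(x, flip x i) \<in> asg f" by (auto simp: asg_def)
  then show "flip x i \<in> A" using assms x unfolding attractor_def by blast
qed

lemma attr_disj:
  assumes A: "attractor f A" and B: "attractor f B" and x: "x \<in> A" "x \<in> B"
  shows "A = B"
proof -
  have sA: "strongly_connected (asg f) A" and sB: "strongly_connected (asg f) B"
    using A B by (auto simp: attractor_def scc_def)
  have mA: "\<And>C. A \<subseteq> C \<Longrightarrow> strongly_connected (asg f) C \<Longrightarrow> C = A"
    using A by (simp add: attractor_def scc_def)
  have mB: "\<And>C. B \<subseteq> C \<Longrightarrow> strongly_connected (asg f) C \<Longrightarrow> C = B"
    using B by (simp add: attractor_def scc_def)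
  have sc: "strongly_connected (asg f) (A \<union> B)"
    unfolding strongly_connected_def
  proof (intro ballI)
    fix u v assume u: "u \<in> A \<union> B" and v: "v \<in> A \<union> B"
    have "(u, x) \<in> (asg f)\<^sup>*"
      using u sA sB x unfolding strongly_connected_def by (meson UnE)
    moreover have "(x, v) \<in> (asg f)\<^sup>*"
      using v sA sB x unfolding strongly_connected_def by (meson UnE)
    ultimately show "(u, v) \<in> (asg f)\<^sup>*" by (rule rtrancl_trans)
  qed
  have "A \<union> B = A" by (rule mA[OF _ sc]) simp
  moreover have "A \<union> B = B" by (rule mB[OF _ sc]) simp
  ultimately show ?thesis by simp
qed

lemma fix_reach:
  assumes "f x = x" "(x, y) \<in> (asg f)\<^sup>*"
  shows "y = x"
  using assms(2)
proof (induction rule: rtrancl_induct)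
  case base then show ?case by simp
next
  case (step y w)
  then show ?case using assms(1) by (auto simp: asg_def)
qed

lemma cyc_nofix:
  fixes f :: "('v::finite \<Rightarrow> bool) \<Rightarrow> ('v \<Rightarrow> bool)"
  assumes A: "cyclic_attractor f A" and x: "x \<in> A"
  shows "f x \<noteq> x"
proof
  assume fx: "f x = x"
  obtain u v where uv: "u \<in> A" "v \<in> A" "u \<noteq> v" using A by (auto simp: cyclic_attractor_def)
  have sA: "strongly_connected (asg f) A" using A by (auto simp: cyclic_attractor_def attractor_def scc_def)
  have "u = x" "v = x" using fix_reach[of f x, OF fx] sA x uv unfolding strongly_connected_def by blast+
  then show False using uv by simp
qed

lemma nonexp_nofix:
  fixes f :: "('v::finite \<Rightarrow> bool) \<Rightarrow> ('v \<Rightarrow> bool)"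
  assumes ne: "non_expansive f" and A: "cyclic_attractor f A"
  shows "f p \<noteq> p"
proof
  assume fp: "f p = p"
  obtain a where a: "a \<in> A" using A by (auto simp: cyclic_attractor_def)
  obtain x where x: "x \<in> A" and xmin: "\<And>y. y \<in> A \<Longrightarrow> hamming x p \<le> hamming y p"
    using ex_has_least_nat[of "\<lambda>y. y \<in> A" a "\<lambda>y. hamming y p"] a by blast
  have cl: "\<And>y. (x, y) \<in> asg f \<Longrightarrow> y \<in> A"
    using A x by (auto simp: cyclic_attractor_def attractor_def)
  define D where "D = {i. x i \<noteq> p i}"
  have keep: "f x i = x i" if i: "i \<in> D" for i
  proof (rule ccontr)
    assume "f x i \<noteq> x i"
    then have "(x, flip x i) \<in> asg f" by (auto simp: asg_def)
    then have "flip x i \<in> A" by (rule cl)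
    then have le: "hamming x p \<le> hamming (flip x i) p" by (rule xmin)
    have "{k. flip x i k \<noteq> p k} = D - {i}" using i by (auto simp: D_def flip_def)
    then have "hamming (flip x i) p = card (D - {i})" by (simp add: hamming_def)
    also have "\<dots> < card D" using i by (intro card_Diff1_less) auto
    also have "card D = hamming x p" by (simp add: hamming_def D_def)
    finally show False using le by simp
  qed
  have sub: "D \<subseteq> {i. f x i \<noteq> p i}" using keep by (auto simp: D_def)
  have "hamming (f x) (f p) \<le> hamming x p" using ne by (simp add: non_expansive_def)
  then have "card {i. f x i \<noteq> p i} \<le> card D" by (simp add: fp hamming_def D_def)
  moreover have "card D \<le> card {i. f x i \<noteq> p i}" using sub by (intro card_mono) simp_all
  ultimately have "card D = card {i. f x i \<noteq> p i}" by simp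
  then have eq: "D = {i. f x i \<noteq> p i}" using sub by (intro card_subset_eq) simp_all
  have "f x = x"
  proof
    fix i show "f x i = x i"
    proof (cases "i \<in> D")
      case True then show ?thesis by (rule keep)
    next
      case False
      then have "x i = p i" "f x i = p i" using eq by (auto simp: D_def)
      then show ?thesis by simp
    qed
  qed
  then show False using cyc_nofix[OF A x] by simp
qed

theorem proposition2:
  fixes f :: "('v::finite \<Rightarrow> bool) \<Rightarrow> ('v \<Rightarrow> bool)"
  shows "((\<exists>A B. attractor f A \<and> attractor f B \<and> A \<noteq> B) \<longrightarrow> has_subnet_with f two_critical)
       \<and> ((non_expansive f \<and> (\<exists>A. cyclic_attractor f A)) \<longrightarrow>
            (\<forall>x. f x \<noteq> x) \<and> has_subnet_with f zero_critical)"
proof (intro conjI impI)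
  assume "\<exists>A B. attractor f A \<and> attractor f B \<and> A \<noteq> B"
  then obtain A B where A: "attractor f A" and B: "attractor f B" and AB: "A \<noteq> B" by blast
  define Q where "Q = (\<lambda>(J::'v set, z::'v \<Rightarrow> bool). J \<noteq> {} \<and> z \<in> pts (UNIV - J) \<and>
     (\<exists>T1 T2. trap J (subnet f J z) T1 \<and> trap J (subnet f J z) T2 \<and> T1 \<noteq> {} \<and> T2 \<noteq> {} \<and> T1 \<inter> T2 = {}))"
  have "A \<noteq> {}" "B \<noteq> {}" using A B by (auto simp: attractor_def scc_def)
  moreover have "A \<inter> B = {}" using attr_disj[OF A B] AB by blast
  ultimately have "Q (UNIV, \<lambda>_. False)"
    unfolding Q_def using attr_trap[OF A] attr_trap[OF B] pts_empty by auto
  then obtain Jz where Q: "Q Jz" and mn: "\<And>y. Q y \<Longrightarrow> card (fst Jz) \<le> card (fst y)"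
    using ex_has_least_nat[of Q "(UNIV, \<lambda>_. False)" "\<lambda>y. card (fst y)"] by blast
  obtain J z where Jz: "Jz = (J, z)" by fastforce
  have J: "J \<noteq> {}" "z \<in> pts (UNIV - J)" using Q Jz by (auto simp: Q_def)
  obtain T1 T2 where T: "trap J (subnet f J z) T1" "trap J (subnet f J z) T2" "T1 \<noteq> {}" "T2 \<noteq> {}" "T1 \<inter> T2 = {}"
    using Q Jz by (auto simp: Q_def)
  have min: "S1 \<inter> S2 \<noteq> {}" if "J' \<noteq> {}" "z' \<in> pts (UNIV - J')" "card J' < card J"
       "trap J' (subnet f J' z') S1" "trap J' (subnet f J' z') S2" "S1 \<noteq> {}" "S2 \<noteq> {}"
     for J' z' S1 S2
  proof
    assume "S1 \<inter> S2 = {}"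
    then have "Q (J', z')" using that unfolding Q_def by blast
    then have "card J \<le> card J'" using mn Jz by fastforce
    then show False using that by simp
  qed
  have c2: "card (fixpts J (subnet f J z)) \<ge> 2"
    by (rule crit_fix[OF J T min])
  have strict: "card (fixpts J2 (subnet (subnet f J z) J2 z2)) \<le> 1"
    if "J2 \<noteq> {}" "J2 \<subset> J" "z2 \<in> pts (J - J2)" for J2 z2
  proof (rule ccontr)
    define z3 where "z3 = (\<lambda>k. if k \<in> J then z2 k else z k)"
    have eqs: "subnet (subnet f J z) J2 z2 = subnet f J2 z3"
      unfolding z3_def using that by (intro subnet_comp) auto
    have z3: "z3 \<in> pts (UNIV - J2)" unfolding z3_def using that J by (intro subnet_comp_pts) auto
    assume "\<not> card (fixpts J2 (subnet (subnet f J z) J2 z2)) \<le> 1"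
    then obtain p q where pq: "p \<in> fixpts J2 (subnet f J2 z3)" "q \<in> fixpts J2 (subnet f J2 z3)" "p \<noteq> q"
      unfolding eqs by (metis One_nat_def card_le_Suc0_iff_eq finite)
    have "card J2 < card J" using that by (intro psubset_card_mono) auto
    moreover have "Q (J2, z3)" unfolding Q_def using that z3 fix_trap[OF pq(1)] fix_trap[OF pq(2)] pq(3)
      by auto
    ultimately show False using mn Jz by fastforce
  qed
  have "two_critical J (subnet f J z)" unfolding two_critical_def using c2 strict by blast
  then show "has_subnet_with f two_critical" unfolding has_subnet_with_def using J by blast
next
  assume h: "non_expansive f \<and> (\<exists>A. cyclic_attractor f A)"
  then show nf: "\<forall>x. f x \<noteq> x" using nonexp_nofix by blast
  define Q where "Q = (\<lambda>(J::'v set, z::'v \<Rightarrow> bool). J \<noteq> {} \<and> z \<in> pts (UNIV - J) \<and>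
     fixpts J (subnet f J z) = {})"
  have "Q (UNIV, \<lambda>_. False)"
    unfolding Q_def using nf pts_empty by (auto simp: subnet_UNIV fixpts_def)
  then obtain Jz where Q: "Q Jz" and mn: "\<And>y. Q y \<Longrightarrow> card (fst Jz) \<le> card (fst y)"
    using ex_has_least_nat[of Q "(UNIV, \<lambda>_. False)" "\<lambda>y. card (fst y)"] by blast
  obtain J z where Jz: "Jz = (J, z)" by fastforce
  have J: "J \<noteq> {}" "z \<in> pts (UNIV - J)" "fixpts J (subnet f J z) = {}" using Q Jz by (auto simp: Q_def)
  have strict: "fixpts J2 (subnet (subnet f J z) J2 z2) \<noteq> {}"
    if "J2 \<noteq> {}" "J2 \<subset> J" "z2 \<in> pts (J - J2)" for J2 z2
  proof
    define z3 where "z3 = (\<lambda>k. if k \<in> J then z2 k else z k)"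
    have eqs: "subnet (subnet f J z) J2 z2 = subnet f J2 z3"
      unfolding z3_def using that by (intro subnet_comp) auto
    have z3: "z3 \<in> pts (UNIV - J2)" unfolding z3_def using that J by (intro subnet_comp_pts) auto
    assume "fixpts J2 (subnet (subnet f J z) J2 z2) = {}"
    then have "Q (J2, z3)" unfolding Q_def eqs using that z3 by auto
    moreover have "card J2 < card J" using that by (intro psubset_card_mono) auto
    ultimately show False using mn Jz by fastforce
  qed
  have "zero_critical J (subnet f J z)" unfolding zero_critical_def using J strict by blast
  then show "has_subnet_with f zero_critical" unfolding has_subnet_with_def using J by blast
qed

end
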